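(* Every Generalized Median Mechanism $M:[0,1]^n\to[0,1]$ is DIC for every capacity $k$ with $1\le k\le n$.
   Context: There are $n$ agents $N=\{1,\dots,n\}$ with locations $x_i\in[0,1]$, profile $\boldsymbol{x}$. A mechanism is a deterministic function $M:[0,1]^n\to[0,1]$ giving the facility location from reported locations. The facility has capacity $k$. Given $\boldsymbol{x}$ and $s$, agent $i$ has higher priority than $j$ if $|s-x_i|<|s-x_j|$, ties broken by a fixed deterministic rule; $N_k^*(\boldsymbol{x},s)$ is the set of the $k$ highest-priority agents. Agent $i$'s ex-post equilibrium utility (of the subgame in which agents choose whether to travel to the capacity-$k$ facility, excess travellers rationed by priority) is $u_i^*(s,\boldsymbol{x},k)=1-|s-x_i|$ if $i\in N_k^*(\boldsymbol{x},s)$ and $0$ otherwise, computed at true locations. $M$ is DIC for capacity $k$ if for every $i$, every true profile $\boldsymbol{x}$, every $x_i'\in[0,1]$, and every reports $\hat{\boldsymbol{x}}_{-i}$ of the others, $u_i^*(M(x_i,\hat{\boldsymbol{x}}_{-i}),\boldsymbol{x},k)\ge u_i^*(M(x_i',\hat{\boldsymbol{x}}_{-i}),\boldsymbol{x},k)$. $M$ is a Generalized Median Mechanism if there are constants $a_S\in[0,1]$ for $S\subseteq N$ with $M(\boldsymbol{x})=\min_{S\subseteq N}\max\{\max_{i\in S}x_i,\,a_S\}$ for all $\boldsymbol{x}$ (for $S=\emptyset$ the inner term is $a_\emptyset$). *)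

theory Defs
  imports Complex_Main
begin

definition agents :: "nat \<Rightarrow> nat set" where
  "agents n = {1..n}"

definition profiles :: "nat \<Rightarrow> (nat \<Rightarrow> real) set" where
  "profiles n = {x. \<forall>j\<in>agents n. x j \<in> {0..1}}"

definition gm_term :: "(nat set \<Rightarrow> real) \<Rightarrow> (nat \<Rightarrow> real) \<Rightarrow> nat set \<Rightarrow> real" where
  "gm_term a x S = (if S = {} then a S else max (Max (x ` S)) (a S))"

definition is_GMM :: "nat \<Rightarrow> ((nat \<Rightarrow> real) \<Rightarrow> real) \<Rightarrow> bool" where
  "is_GMM n M \<longleftrightarrow> (\<exists>a :: nat set \<Rightarrow> real.
      (\<forall>S. S \<subseteq> agents n \<longrightarrow> a S \<in> {0..1}) \<and>
      (\<forall>x\<in>profiles n. M x = Min (gm_term a x ` Pow (agents n))))"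

text \<open>Priority: agent j has higher priority than agent i at facility s (true profile x)
  if it is strictly closer, ties broken by a fixed deterministic rule, modelled as a fixed
  strict order on agents given by an injective rank (smaller rank wins).\<close>

definition higher_prio :: "(nat \<Rightarrow> nat) \<Rightarrow> (nat \<Rightarrow> real) \<Rightarrow> real \<Rightarrow> nat \<Rightarrow> nat \<Rightarrow> bool" where
  "higher_prio rank x s j i \<longleftrightarrow>
     \<bar>s - x j\<bar> < \<bar>s - x i\<bar> \<or> (\<bar>s - x j\<bar> = \<bar>s - x i\<bar> \<and> rank j < rank i)"

definition top_k :: "nat \<Rightarrow> (nat \<Rightarrow> nat) \<Rightarrow> (nat \<Rightarrow> real) \<Rightarrow> real \<Rightarrow> nat \<Rightarrow> nat set" where
  "top_k n rank x s k = {i \<in> agents n. card {j \<in> agents n. higher_prio rank x s j i} < k}"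

definition eq_util :: "nat \<Rightarrow> (nat \<Rightarrow> nat) \<Rightarrow> nat \<Rightarrow> real \<Rightarrow> (nat \<Rightarrow> real) \<Rightarrow> nat \<Rightarrow> real" where
  "eq_util n rank i s x k = (if i \<in> top_k n rank x s k then 1 - \<bar>s - x i\<bar> else 0)"

definition DIC :: "nat \<Rightarrow> (nat \<Rightarrow> nat) \<Rightarrow> ((nat \<Rightarrow> real) \<Rightarrow> real) \<Rightarrow> nat \<Rightarrow> bool" where
  "DIC n rank M k \<longleftrightarrow>
     (\<forall>i\<in>agents n. \<forall>x\<in>profiles n. \<forall>x'\<in>{0..1::real}. \<forall>xh\<in>profiles n.
        eq_util n rank i (M (xh(i := x i))) x k \<ge> eq_util n rank i (M (xh(i := x'))) x k)"

end

theory Submission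
  imports Defs
begin

lemma gm_notin:
  assumes "i \<notin> S"
  shows "gm_term a (xh(i := t)) S = gm_term a (xh(i := t')) S"
proof -
  have "(xh(i := t)) ` S = (xh(i := t')) ` S" using assms by (auto intro!: image_cong)
  then show ?thesis unfolding gm_term_def by simp
qed

definition cS :: "(nat set \<Rightarrow> real) \<Rightarrow> (nat \<Rightarrow> real) \<Rightarrow> nat \<Rightarrow> nat set \<Rightarrow> real" where
  "cS a xh i S = (if S - {i} = {} then a S else max (Max (xh ` (S - {i}))) (a S))"

lemma gm_in:
  assumes "i \<in> S" "finite S"
  shows "gm_term a (xh(i := t)) S = max t (cS a xh i S)"
proof -
  have img: "(xh(i := t)) ` S = insert t (xh ` (S - {i}))" using assms(1) by auto
  show ?thesis
  proof (cases "S - {i} = {}")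
    case True
    then have "S = {i}" using assms(1) by auto
    then show ?thesis unfolding gm_term_def cS_def by simp
  next
    case False
    have "Max (insert t (xh ` (S - {i}))) = max t (Max (xh ` (S - {i})))"
      using False assms(2) by (simp add: Max_insert)
    then show ?thesis using False assms(1) unfolding gm_term_def cS_def img
      by (auto simp: max.assoc)
  qed
qed

lemma between:
  assumes fin: "finite P" and ne: "{} \<in> P"
    and fS: "\<And>S. S \<in> P \<Longrightarrow> finite S"
  shows "let u = Min (gm_term a (xh(i := t)) ` P); v = Min (gm_term a (xh(i := t')) ` P) in
           (t \<le> u \<and> u \<le> v) \<or> (v \<le> u \<and> u \<le> t)"
proof -
  define g where "g = gm_term a (xh(i := t))"
  define g' where "g' = gm_term a (xh(i := t'))"
  define u where "u = Min (g ` P)"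
  define v where "v = Min (g' ` P)"
  have "u \<in> g ` P" unfolding u_def using fin ne by (intro Min_in) auto
  then obtain S1 where S1: "S1 \<in> P" "u = g S1" by auto
  have "v \<in> g' ` P" unfolding v_def using fin ne by (intro Min_in) auto
  then obtain S0 where S0: "S0 \<in> P" "v = g' S0" by auto
  have u0: "u \<le> g S0" unfolding u_def using fin S0 by auto
  have v1: "v \<le> g' S1" unfolding v_def using fin S1 by auto
  have "(t \<le> u \<and> u \<le> v) \<or> (v \<le> u \<and> u \<le> t)"
  proof (cases "i \<in> S1")
    case i1: True
    note e1 = gm_in[OF i1 fS[OF S1(1)], of a xh]
    show ?thesis
    proof (cases "i \<in> S0")
      case True
      note e0 = gm_in[OF True fS[OF S0(1)], of a xh]
      show ?thesis using u0 v1 S0 S1 e0 e1 unfolding g_def g'_def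
        by (smt (verit, ccfv_SIG))
    next
      case False
      note e0 = gm_notin[OF False, of a xh t t']
      show ?thesis using u0 v1 S0 S1 e0 e1 unfolding g_def g'_def
        by (smt (verit, ccfv_SIG))
    qed
  next
    case i1: False
    note e1 = gm_notin[OF i1, of a xh t t']
    show ?thesis
    proof (cases "i \<in> S0")
      case True
      note e0 = gm_in[OF True fS[OF S0(1)], of a xh]
      show ?thesis using u0 v1 S0 S1 e0 e1 unfolding g_def g'_def
        by (smt (verit, ccfv_SIG))
    next
      case False
      note e0 = gm_notin[OF False, of a xh t t']
      show ?thesis using u0 v1 S0 S1 e0 e1 unfolding g_def g'_def
        by (smt (verit, ccfv_SIG))
    qed
  qed
  then show ?thesis unfolding u_def v_def g_def g'_def Let_def .
qed

lemma range01:
  assumes fin: "finite P" and ne: "{} \<in> P"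
    and aS: "\<And>S. S \<in> P \<Longrightarrow> a S \<in> {0..1}"
  shows "Min (gm_term a y ` P) \<in> {0..1}"
proof -
  have "Min (gm_term a y ` P) \<in> gm_term a y ` P" using fin ne by (intro Min_in) auto
  then obtain S where S: "S \<in> P" "Min (gm_term a y ` P) = gm_term a y S" by auto
  have "gm_term a y S \<ge> a S" unfolding gm_term_def by auto
  moreover have "Min (gm_term a y ` P) \<le> gm_term a y {}" using fin ne by auto
  moreover have "gm_term a y {} = a {}" unfolding gm_term_def by simp
  ultimately show ?thesis using S aS[OF S(1)] aS[OF ne] by auto
qed

lemma prio_mono:
  assumes "(xi \<le> s \<and> s \<le> s') \<or> (s' \<le> s \<and> s \<le> xi)"
    and "higher_prio rank x s j i" and "x i = xi"
  shows "higher_prio rank x s' j i"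
  using assms unfolding higher_prio_def by (smt (verit))

theorem proposition3p8:
  fixes n k :: nat and rank :: "nat \<Rightarrow> nat" and M :: "(nat \<Rightarrow> real) \<Rightarrow> real"
  assumes "inj_on rank (agents n)"
    and "is_GMM n M"
    and "1 \<le> k" and "k \<le> n"
  shows "DIC n rank M k"
  unfolding DIC_def
proof (intro ballI)
  fix i x x' xh
  assume i: "i \<in> agents n" and x: "x \<in> profiles n" and x': "x' \<in> {0..1::real}"
    and xh: "xh \<in> profiles n"
  obtain a where a: "\<forall>S. S \<subseteq> agents n \<longrightarrow> a S \<in> {0..1}"
    and Ma: "\<forall>x\<in>profiles n. M x = Min (gm_term a x ` Pow (agents n))"
    using assms(2) unfolding is_GMM_def by blast
  have xi: "x i \<in> {0..1}" using x i unfolding profiles_def by auto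
  have p1: "xh(i := x i) \<in> profiles n" using xh xi unfolding profiles_def by auto
  have p2: "xh(i := x') \<in> profiles n" using xh x' unfolding profiles_def by auto
  define s where "s = M (xh(i := x i))"
  define s' where "s' = M (xh(i := x'))"
  have fin: "finite (Pow (agents n))" unfolding agents_def by simp
  have ne: "{} \<in> Pow (agents n)" by simp
  have fS: "\<And>S. S \<in> Pow (agents n) \<Longrightarrow> finite S"
    unfolding agents_def using finite_subset by auto
  have s_eq: "s = Min (gm_term a (xh(i := x i)) ` Pow (agents n))" using Ma p1 s_def by auto
  have s'_eq: "s' = Min (gm_term a (xh(i := x')) ` Pow (agents n))" using Ma p2 s'_def by auto
  have btw: "(x i \<le> s \<and> s \<le> s') \<or> (s' \<le> s \<and> s \<le> x i)"
    using between[OF fin ne fS, of a xh i "x i" x'] unfolding s_eq s'_eq Let_def .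
  have s01: "s \<in> {0..1}" unfolding s_eq using range01[OF fin ne] a by auto
  have sub: "{j \<in> agents n. higher_prio rank x s j i} \<subseteq> {j \<in> agents n. higher_prio rank x s' j i}"
    using prio_mono[OF btw] by auto
  have cardle: "card {j \<in> agents n. higher_prio rank x s j i} \<le> card {j \<in> agents n. higher_prio rank x s' j i}"
    by (rule card_mono[OF _ sub]) (simp add: agents_def)
  show "eq_util n rank i (M (xh(i := x'))) x k \<le> eq_util n rank i (M (xh(i := x i))) x k"
    unfolding s_def[symmetric] s'_def[symmetric] eq_util_def top_k_def
    using cardle btw s01 xi i by auto
qed

end
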